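(* For any rational number $t>1/2$, there exist no minimally $t$-tough split graphs.
   Context: All graphs are finite, simple and undirected. A graph is split if its vertex set can be partitioned into a clique and an independent set. $\omega(H)$ denotes the number of components of $H$. A cutset of $G$ is a vertex set $S$ with $G-S$ disconnected. For positive real $t$, $G$ is $t$-tough if $\omega(G-S)\le |S|/t$ for every cutset $S$; the toughness $\tau(G)$ is the largest such $t$, with $\tau(K_n)=\infty$ for all $n\ge1$. $G$ is minimally $t$-tough if $\tau(G)=t$ and $\tau(G-e)<t$ for every edge $e$ of $G$. *)

theory Defs
  imports Complex_Main "HOL-Library.Extended_Real"
begin

definition graph :: "'a set \<Rightarrow> 'a set set \<Rightarrow> bool" where
  "graph V E \<longleftrightarrow> finite V \<and> (\<forall>e\<in>E. \<exists>u v. e = {u, v} \<and> u \<noteq> v \<and> u \<in> V \<and> v \<in> V)"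

definition adj :: "'a set set \<Rightarrow> 'a \<Rightarrow> 'a \<Rightarrow> bool" where
  "adj E u v \<longleftrightarrow> {u, v} \<in> E \<and> u \<noteq> v"

definition conn_rel :: "'a set \<Rightarrow> 'a set set \<Rightarrow> ('a \<times> 'a) set" where
  "conn_rel V E = ({(u, v). u \<in> V \<and> v \<in> V \<and> adj E u v})\<^sup>* \<inter> (V \<times> V)"

definition ncomp :: "'a set \<Rightarrow> 'a set set \<Rightarrow> nat" where
  "ncomp V E = card (V // conn_rel V E)"

definition del_verts_V :: "'a set \<Rightarrow> 'a set \<Rightarrow> 'a set" where
  "del_verts_V V S = V - S"

definition del_verts_E :: "'a set set \<Rightarrow> 'a set \<Rightarrow> 'a set set" where
  "del_verts_E E S = {e \<in> E. e \<inter> S = {}}"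

definition cutset :: "'a set \<Rightarrow> 'a set set \<Rightarrow> 'a set \<Rightarrow> bool" where
  "cutset V E S \<longleftrightarrow> S \<subseteq> V \<and> ncomp (del_verts_V V S) (del_verts_E E S) \<ge> 2"

definition tough :: "real \<Rightarrow> 'a set \<Rightarrow> 'a set set \<Rightarrow> bool" where
  "tough t V E \<longleftrightarrow> (\<forall>S. cutset V E S \<longrightarrow>
      real (ncomp (del_verts_V V S) (del_verts_E E S)) \<le> real (card S) / t)"

text \<open>Toughness: the largest t such that G is t-tough, i.e. the minimum of
|S|/omega(G-S) over all cutsets S; infinity if there is no cutset (complete graphs).\<close>
definition toughness :: "'a set \<Rightarrow> 'a set set \<Rightarrow> ereal" where
  "toughness V E = (if \<exists>S. cutset V E S
     then ereal (Min {real (card S) / real (ncomp (del_verts_V V S) (del_verts_E E S)) | S. cutset V E S})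
     else \<infinity>)"

definition minimally_tough :: "real \<Rightarrow> 'a set \<Rightarrow> 'a set set \<Rightarrow> bool" where
  "minimally_tough t V E \<longleftrightarrow> toughness V E = ereal t \<and> (\<forall>e\<in>E. toughness V (E - {e}) < ereal t)"

definition clique :: "'a set set \<Rightarrow> 'a set \<Rightarrow> bool" where
  "clique E K \<longleftrightarrow> (\<forall>u\<in>K. \<forall>v\<in>K. u \<noteq> v \<longrightarrow> {u, v} \<in> E)"

definition independent :: "'a set set \<Rightarrow> 'a set \<Rightarrow> bool" where
  "independent E I \<longleftrightarrow> (\<forall>u\<in>I. \<forall>v\<in>I. {u, v} \<notin> E)"

definition split_graph :: "'a set \<Rightarrow> 'a set set \<Rightarrow> bool" where
  "split_graph V E \<longleftrightarrow> (\<exists>K I. K \<union> I = V \<and> K \<inter> I = {} \<and> clique E K \<and> independent E I)"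

end

theory Submission
  imports Defs
begin

lemma adj_sym: "adj E a b = adj E b a"
  by (auto simp: adj_def insert_commute)

lemma adj_del: "adj (del_verts_E E S) a b \<longleftrightarrow> adj E a b \<and> a \<notin> S \<and> b \<notin> S"
  by (auto simp: adj_def del_verts_E_def)

lemma adj_del2: "adj (del_verts_E (E - {e}) S) a b \<longleftrightarrow> adj E a b \<and> {a,b} \<noteq> e \<and> a \<notin> S \<and> b \<notin> S"
  by (auto simp: adj_def del_verts_E_def)

lemma adj_V: assumes "graph V E" "adj E a b" shows "a \<in> V" "b \<in> V"
proof -
  from assms obtain u v where uv: "{a,b} = {u,v}" "u \<in> V" "v \<in> V"
    unfolding graph_def adj_def by blast
  have "a \<in> {u,v}" "b \<in> {u,v}" using uv(1) by (metis insertI1 insert_commute)+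
  then show "a \<in> V" "b \<in> V" using uv by auto
qed

lemma conn_rel_equiv: "equiv V (conn_rel V E)"
proof -
  let ?B = "{(u, v). u \<in> V \<and> v \<in> V \<and> adj E u v}"
  have sB: "sym ?B" by (auto simp: sym_def adj_sym)
  have s: "sym (?B\<^sup>*)" by (rule sym_rtrancl[OF sB])
  show ?thesis unfolding equiv_def conn_rel_def
  proof (intro conjI)
    show "refl_on V (?B\<^sup>* \<inter> V \<times> V)" by (auto simp: refl_on_def)
    show "sym (?B\<^sup>* \<inter> V \<times> V)" using s by (auto simp: sym_def)
    show "trans (?B\<^sup>* \<inter> V \<times> V)" unfolding trans_def
      by (auto intro: rtrancl_trans)
  qed auto
qed

lemma conn_adj: "a \<in> V \<Longrightarrow> b \<in> V \<Longrightarrow> adj E a b \<Longrightarrow> (a,b) \<in> conn_rel V E"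
  unfolding conn_rel_def by auto

lemma conn_refl: "a \<in> V \<Longrightarrow> (a,a) \<in> conn_rel V E"
  unfolding conn_rel_def by auto

lemma conn_trans: "(a,b) \<in> conn_rel V E \<Longrightarrow> (b,c) \<in> conn_rel V E \<Longrightarrow> (a,c) \<in> conn_rel V E"
  using conn_rel_equiv[of V E] unfolding equiv_def trans_def by blast

lemma conn_symm: "(a,b) \<in> conn_rel V E \<Longrightarrow> (b,a) \<in> conn_rel V E"
  using conn_rel_equiv[of V E] unfolding equiv_def sym_def by blast

lemma conn_isolated:
  assumes "(y,z) \<in> conn_rel V E" "\<forall>b\<in>V. \<not> adj E y b" shows "z = y"
proof -
  from assms(1) have "(y,z) \<in> {(u, v). u \<in> V \<and> v \<in> V \<and> adj E u v}\<^sup>*"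
    by (simp add: conn_rel_def)
  then show ?thesis using assms(2) by (cases rule: converse_rtranclE) auto
qed

lemma ncomp_ge:
  assumes "finite V" "R \<subseteq> V" "\<And>a b. a\<in>R \<Longrightarrow> b\<in>R \<Longrightarrow> a\<noteq>b \<Longrightarrow> (a,b) \<notin> conn_rel V E"
  shows "card R \<le> ncomp V E"
proof -
  let ?r = "conn_rel V E"
  have eq: "equiv V ?r" by (rule conn_rel_equiv)
  have inj: "inj_on (\<lambda>a. ?r``{a}) R"
  proof (rule inj_onI)
    fix a b assume ab: "a\<in>R" "b\<in>R" "?r``{a} = ?r``{b}"
    then have "(a,b) \<in> ?r" using eq_equiv_class_iff[OF eq] assms(2) by blast
    then show "a = b" using assms(3) ab by blast
  qed
  have sub: "(\<lambda>a. ?r``{a}) ` R \<subseteq> V // ?r" using assms(2) by (auto intro: quotientI)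
  have fin: "finite (V // ?r)" using finite_quotient[OF assms(1) equiv_type[OF eq]] .
  show ?thesis unfolding ncomp_def using card_inj_on_le[OF inj sub fin] .
qed

lemma ncomp_le:
  assumes "finite R" "R \<subseteq> V" "\<And>v. v\<in>V \<Longrightarrow> \<exists>r\<in>R. (v,r) \<in> conn_rel V E"
  shows "ncomp V E \<le> card R"
proof -
  let ?r = "conn_rel V E"
  have eq: "equiv V ?r" by (rule conn_rel_equiv)
  have "V // ?r \<subseteq> (\<lambda>a. ?r``{a}) ` R"
  proof
    fix X assume "X \<in> V // ?r"
    then obtain v where v: "X = ?r``{v}" "v \<in> V" by (rule quotientE)
    then obtain r where r: "r \<in> R" "(v,r) \<in> ?r" using assms(3) by blast
    have "?r``{v} = ?r``{r}" using equiv_class_eq[OF eq r(2)] .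
    then show "X \<in> (\<lambda>a. ?r``{a}) ` R" using v r by blast
  qed
  then have "card (V // ?r) \<le> card ((\<lambda>a. ?r``{a}) ` R)"
    using assms(1) by (intro card_mono) auto
  also have "\<dots> \<le> card R" by (rule card_image_le[OF assms(1)])
  finally show ?thesis unfolding ncomp_def .
qed

lemma ncomp_isolated:
  assumes "finite V" "Y \<subseteq> V" "a \<in> V" "a \<notin> Y" "\<And>y b. y \<in> Y \<Longrightarrow> b \<in> V \<Longrightarrow> \<not> adj E y b"
  shows "card Y + 1 \<le> ncomp V E"
proof -
  have fY: "finite Y" using assms(1,2) finite_subset by blast
  have "card (insert a Y) \<le> ncomp V E"
  proof (rule ncomp_ge[OF assms(1)])
    show "insert a Y \<subseteq> V" using assms by auto
    fix c d assume cd: "c \<in> insert a Y" "d \<in> insert a Y" "c \<noteq> d"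
    show "(c,d) \<notin> conn_rel V E"
    proof
      assume h: "(c,d) \<in> conn_rel V E"
      show False
      proof (cases "c \<in> Y")
        case True
        then have "d = c" using conn_isolated[OF h] assms(5) by blast
        then show False using cd by simp
      next
        case False
        then have "c = a" using cd by auto
        then have "d \<in> Y" using cd by auto
        then have "c = d" using conn_isolated[OF conn_symm[OF h]] assms(5) by blast
        then show False using cd by simp
      qed
    qed
  qed
  then show ?thesis using fY assms(4) by simp
qed

lemma conn_del_edge:
  assumes "u \<in> S \<or> w \<in> S \<or> (u,w) \<in> conn_rel (V - S) (del_verts_E (E - {{u,w}}) S)"
  shows "conn_rel (V - S) (del_verts_E (E - {{u,w}}) S) = conn_rel (V - S) (del_verts_E E S)"
proof -
  let ?B1 = "{(a, b). a \<in> V - S \<and> b \<in> V - S \<and> adj (del_verts_E (E - {{u,w}}) S) a b}"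
  let ?B2 = "{(a, b). a \<in> V - S \<and> b \<in> V - S \<and> adj (del_verts_E E S) a b}"
  have c1: "conn_rel (V - S) (del_verts_E (E - {{u,w}}) S) = ?B1\<^sup>* \<inter> (V - S) \<times> (V - S)"
    by (simp add: conn_rel_def)
  have c2: "conn_rel (V - S) (del_verts_E E S) = ?B2\<^sup>* \<inter> (V - S) \<times> (V - S)"
    by (simp add: conn_rel_def)
  have "?B1 \<subseteq> ?B2" by (auto simp: adj_def del_verts_E_def)
  moreover have "?B2 \<subseteq> ?B1\<^sup>*"
  proof
    fix p assume "p \<in> ?B2"
    then obtain a b where p: "p = (a,b)" "a \<in> V - S" "b \<in> V - S" "adj E a b"
      by (auto simp: adj_del)
    show "p \<in> ?B1\<^sup>*"
    proof (cases "{a,b} = {u,w}")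
      case False
      then have "p \<in> ?B1" using p by (auto simp: adj_del2)
      then show ?thesis by blast
    next
      case True
      then have uw: "u \<notin> S" "w \<notin> S" using p by (auto simp: doubleton_eq_iff)
      then have cuw: "(u,w) \<in> ?B1\<^sup>* \<inter> (V - S) \<times> (V - S)" using assms c1 by auto
      have cwu: "(w,u) \<in> ?B1\<^sup>* \<inter> (V - S) \<times> (V - S)"
        using conn_symm[of u w "V - S" "del_verts_E (E - {{u,w}}) S"] cuw c1 by auto
      from True have "(a = u \<and> b = w) \<or> (a = w \<and> b = u)" by (auto simp: doubleton_eq_iff)
      then show ?thesis using cuw cwu p by auto
    qed
  qed
  ultimately have "?B2\<^sup>* = ?B1\<^sup>*" by (rule rtrancl_subset)
  then show ?thesis using c1 c2 by simp
qed


lemma finite_cutsets: "finite V \<Longrightarrow> finite {S. cutset V E S}"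
  by (rule finite_subset[of _ "Pow V"]) (auto simp: cutset_def)

lemma tough_ge:
  assumes "finite V" "toughness V E = ereal t" "cutset V E S"
  shows "t * real (ncomp (V - S) (del_verts_E E S)) \<le> real (card S)"
proof -
  let ?f = "\<lambda>S. real (card S) / real (ncomp (del_verts_V V S) (del_verts_E E S))"
  have ex: "\<exists>S. cutset V E S" using assms(3) by blast
  have eqset: "{?f S | S. cutset V E S} = ?f ` {S. cutset V E S}" by blast
  have fin: "finite {?f S | S. cutset V E S}" using eqset finite_cutsets[OF assms(1)] by simp
  have "Min {?f S | S. cutset V E S} \<le> ?f S" using Min_le[OF fin] assms(3) by blast
  moreover have "Min {?f S | S. cutset V E S} = t" using assms(2) ex by (simp add: toughness_def)
  ultimately have le: "t \<le> ?f S" by simp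
  have "ncomp (V - S) (del_verts_E E S) \<ge> 2" using assms(3) by (simp add: cutset_def del_verts_V_def)
  then have pos: "real (ncomp (V - S) (del_verts_E E S)) > 0" by simp
  from le pos show ?thesis by (simp add: del_verts_V_def pos_le_divide_eq)
qed

lemma tough_lt:
  assumes "finite V" "toughness V E < ereal t"
  shows "\<exists>S. cutset V E S \<and> real (card S) < t * real (ncomp (V - S) (del_verts_E E S))"
proof -
  let ?f = "\<lambda>S. real (card S) / real (ncomp (del_verts_V V S) (del_verts_E E S))"
  have ex: "\<exists>S. cutset V E S"
  proof (rule ccontr)
    assume "\<not> ?thesis"
    then have "toughness V E = \<infinity>" by (simp add: toughness_def)
    then show False using assms(2) by simp
  qed
  have eqset: "{?f S | S. cutset V E S} = ?f ` {S. cutset V E S}" by blast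
  have fin: "finite {?f S | S. cutset V E S}" using eqset finite_cutsets[OF assms(1)] by simp
  have ne: "{?f S | S. cutset V E S} \<noteq> {}" using ex by blast
  have "Min {?f S | S. cutset V E S} \<in> {?f S | S. cutset V E S}" by (rule Min_in[OF fin ne])
  then obtain S where S: "cutset V E S" "?f S = Min {?f S | S. cutset V E S}" by auto
  have "ereal (Min {?f S | S. cutset V E S}) < ereal t" using assms(2) ex by (simp add: toughness_def)
  then have lt: "?f S < t" using S by simp
  have "ncomp (V - S) (del_verts_E E S) \<ge> 2" using S(1) by (simp add: cutset_def del_verts_V_def)
  then have pos: "real (ncomp (V - S) (del_verts_E E S)) > 0" by simp
  from lt pos have "real (card S) < t * real (ncomp (V - S) (del_verts_E E S))"
    by (simp add: del_verts_V_def pos_divide_less_eq mult.commute)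
  then show ?thesis using S(1) by blast
qed

lemma cut_bound:
  assumes "finite V" "toughness V E = ereal t" "t > 0" "T \<subseteq> V" "Y \<subseteq> V - T" "a \<in> V - T" "a \<notin> Y"
    "Y \<noteq> {}" "\<And>y c. y \<in> Y \<Longrightarrow> adj E y c \<Longrightarrow> c \<in> T"
  shows "t * (real (card Y) + 1) \<le> real (card T)"
proof -
  have fV: "finite (V - T)" using assms(1) by simp
  have nc: "card Y + 1 \<le> ncomp (V - T) (del_verts_E E T)"
  proof (rule ncomp_isolated[OF fV assms(5,6,7)])
    fix y b assume "y \<in> Y" "b \<in> V - T"
    then show "\<not> adj (del_verts_E E T) y b" using assms(9) by (auto simp: adj_del)
  qed
  have fY: "finite Y" using assms(1,5) finite_subset by blast
  have "card Y \<ge> 1" using fY assms(8) by (simp add: Suc_leI card_gt_0_iff)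
  then have cut: "cutset V E T" using nc assms(4) by (simp add: cutset_def del_verts_V_def)
  have "t * (real (card Y) + 1) \<le> t * real (ncomp (V - T) (del_verts_E E T))"
    using nc assms(3) by (intro mult_left_mono) auto
  also have "\<dots> \<le> real (card T)" by (rule tough_ge[OF assms(1,2) cut])
  finally show ?thesis .
qed


theorem mainTheorem5:
  fixes t :: real and V :: "'a set" and E :: "'a set set"
  assumes "t \<in> \<rat>" and "t > 1/2"
    and "graph V E" and "split_graph V E"
  shows "\<not> minimally_tough t V E"
proof
  assume mt: "minimally_tough t V E"
  have tV: "toughness V E = ereal t"
    and crit0: "\<And>e. e \<in> E \<Longrightarrow> toughness V (E - {e}) < ereal t"
    using mt by (auto simp: minimally_tough_def)
  have fV: "finite V" using assms(3) by (simp add: graph_def)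
  have tpos: "t > 0" using assms(2) by simp
  obtain K I where KI: "K \<union> I = V" "K \<inter> I = {}" "clique E K" "independent E I"
    using assms(4) by (auto simp: split_graph_def)
  have fK: "finite K" and fI: "finite I" using fV KI(1) by auto
  have tg: "\<And>S. cutset V E S \<Longrightarrow> t * real (ncomp (V - S) (del_verts_E E S)) \<le> real (card S)"
    by (rule tough_ge[OF fV tV])
  have cb: "\<And>T Y a. T \<subseteq> V \<Longrightarrow> Y \<subseteq> V - T \<Longrightarrow> a \<in> V - T \<Longrightarrow> a \<notin> Y \<Longrightarrow> Y \<noteq> {} \<Longrightarrow>
      (\<And>y c. y \<in> Y \<Longrightarrow> adj E y c \<Longrightarrow> c \<in> T) \<Longrightarrow> t * (real (card Y) + 1) \<le> real (card T)"
    by (rule cut_bound[OF fV tV tpos])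
  have nbK: "\<And>y c. y \<in> I \<Longrightarrow> adj E y c \<Longrightarrow> c \<in> K"
  proof -
    fix y c assume yc: "y \<in> I" "adj E y c"
    then have "c \<in> V" using adj_V[OF assms(3)] by blast
    moreover have "c \<notin> I" using KI(4) yc by (auto simp: independent_def adj_def)
    ultimately show "c \<in> K" using KI(1) by blast
  qed
  have Kadj: "\<And>a b. a \<in> K \<Longrightarrow> b \<in> K \<Longrightarrow> a \<noteq> b \<Longrightarrow> adj E a b"
    using KI(3) by (auto simp: clique_def adj_def)
  have "\<exists>y z. y \<in> V \<and> z \<in> V \<and> y \<noteq> z \<and> \<not> adj E y z"
  proof (rule ccontr)
    assume nc: "\<not> ?thesis"
    have "\<exists>S. cutset V E S"
    proof (rule ccontr)
      assume "\<not> (\<exists>S. cutset V E S)"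
      then have "toughness V E = \<infinity>" by (simp add: toughness_def)
      then show False using tV by simp
    qed
    then obtain S0 where S0: "cutset V E S0" by blast
    have all: "\<And>a b. a \<in> V \<Longrightarrow> b \<in> V \<Longrightarrow> a \<noteq> b \<Longrightarrow> adj E a b" using nc by blast
    have "ncomp (V - S0) (del_verts_E E S0) \<le> 1"
    proof (cases "V - S0 = {}")
      case True
      have "ncomp (V - S0) (del_verts_E E S0) \<le> card ({}::'a set)"
      proof (rule ncomp_le)
        show "finite ({}::'a set)" by simp
        show "({}::'a set) \<subseteq> V - S0" by simp
        fix v assume "v \<in> V - S0"
        then show "\<exists>r\<in>({}::'a set). (v, r) \<in> conn_rel (V - S0) (del_verts_E E S0)" using True by blast
      qed
      then show ?thesis by simp
    next
      case False
      then obtain v0 where v0: "v0 \<in> V - S0" by blast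
      have "ncomp (V - S0) (del_verts_E E S0) \<le> card {v0}"
      proof (rule ncomp_le)
        show "finite {v0}" by simp
        show "{v0} \<subseteq> V - S0" using v0 by simp
        fix v assume v: "v \<in> V - S0"
        show "\<exists>r\<in>{v0}. (v, r) \<in> conn_rel (V - S0) (del_verts_E E S0)"
        proof (cases "v = v0")
          case True
          have "(v, v) \<in> conn_rel (V - S0) (del_verts_E E S0)" using v by (rule conn_refl)
          then show ?thesis using True by simp
        next
          case False
          then have "adj E v v0" using all v v0 by blast
          then have "adj (del_verts_E E S0) v v0" using v v0 by (simp add: adj_del)
          then have "(v, v0) \<in> conn_rel (V - S0) (del_verts_E E S0)" using v v0 by (intro conn_adj)
          then show ?thesis by blast
        qed
      qed
      then show ?thesis by simp
    qed
    then show False using S0 by (simp add: cutset_def del_verts_V_def)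
  qed
  then obtain y0 z0 where yz: "y0 \<in> V" "z0 \<in> V" "y0 \<noteq> z0" "\<not> adj E y0 z0" by blast
  obtain x z where xz: "x \<in> I" "z \<in> V" "z \<noteq> x" "\<not> adj E x z"
  proof (cases "y0 \<in> I")
    case True then show ?thesis using that yz by blast
  next
    case False
    then have "y0 \<in> K" using yz KI by blast
    have "z0 \<in> I"
    proof (rule ccontr)
      assume "z0 \<notin> I"
      then have "z0 \<in> K" using yz KI by blast
      then show False using Kadj[of y0 z0] \<open>y0 \<in> K\<close> yz by blast
    qed
    have "\<not> adj E z0 y0" using yz(4) adj_sym[of E z0 y0] by simp
    then show ?thesis using that[of z0 y0] yz \<open>z0 \<in> I\<close> by blast
  qed
  define M where "M = {c \<in> V. adj E x c}"
  have MK: "M \<subseteq> K" using nbK xz(1) by (auto simp: M_def)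
  have fM: "finite M" using MK fK finite_subset by blast
  have xM: "x \<notin> M" by (auto simp: M_def adj_def)
  have zM: "z \<notin> M" using xz by (auto simp: M_def)
  have xV: "x \<in> V" using xz KI by blast
  have m2t: "2 * t \<le> real (card M)"
  proof -
    have "t * (real (card {x}) + 1) \<le> real (card M)"
    proof (rule cb)
      show "M \<subseteq> V" by (auto simp: M_def)
      show "{x} \<subseteq> V - M" using xV xM by auto
      show "z \<in> V - M" using xz zM by auto
      show "z \<notin> {x}" using xz by auto
      show "{x} \<noteq> {}" by simp
      fix y c assume "y \<in> {x}" "adj E y c"
      then show "c \<in> M" using adj_V[OF assms(3)] by (auto simp: M_def)
    qed
    then show ?thesis by simp
  qed
  have "real (card M) > 1" using m2t assms(2) by linarith
  then have m2: "card M \<ge> 2" by simp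
  have pair: "card I \<ge> 2 \<and> (\<forall>y\<in>I. adj E u y \<longrightarrow> y = x) \<and> real (card K) - 1 < t * (1 + real (card I))"
    if uw: "u \<in> M" "w \<in> M" "u \<noteq> w" for u w
  proof -
    have uK: "u \<in> K" and wK: "w \<in> K" using uw MK by auto
    have uI: "u \<notin> I" "w \<notin> I" using uK wK KI(2) by auto
    have xu: "adj E x u" "adj E x w" using uw by (auto simp: M_def)
    define e where "e = {u,w}"
    have eE: "e \<in> E" using KI(3) uK wK uw(3) by (auto simp: clique_def e_def)
    obtain S where cS: "cutset V (E - {e}) S"
      and lt: "real (card S) < t * real (ncomp (V - S) (del_verts_E (E - {e}) S))"
      using tough_lt[OF fV crit0[OF eE]] by blast
    define E2 where "E2 = del_verts_E (E - {e}) S"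
    define om where "om = ncomp (V - S) E2"
    have SV: "S \<subseteq> V" using cS by (simp add: cutset_def)
    have om2: "om \<ge> 2" using cS by (simp add: cutset_def om_def E2_def del_verts_V_def)
    have lt': "real (card S) < t * real om" using lt by (simp add: om_def E2_def)
    have sep: "u \<notin> S \<and> w \<notin> S \<and> (u,w) \<notin> conn_rel (V - S) E2"
    proof (rule ccontr)
      assume "\<not> ?thesis"
      then have "conn_rel (V - S) E2 = conn_rel (V - S) (del_verts_E E S)"
        using conn_del_edge[of u S w V E] by (auto simp: E2_def e_def)
      then have omeq: "om = ncomp (V - S) (del_verts_E E S)" by (simp add: om_def ncomp_def)
      then have "cutset V E S" using SV om2 by (simp add: cutset_def del_verts_V_def)
      then have "t * real om \<le> card S" using tg omeq by simp
      then show False using lt' by simp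
    qed
    have uS: "u \<notin> S" and wS: "w \<notin> S" and nuw: "(u,w) \<notin> conn_rel (V - S) E2" using sep by auto
    have adj2: "\<And>a b. adj E2 a b \<longleftrightarrow> adj E a b \<and> {a,b} \<noteq> e \<and> a \<notin> S \<and> b \<notin> S"
      by (simp add: E2_def adj_del2)
    have uV: "u \<in> V" "w \<in> V" using uK wK KI by auto
    have via: "False" if c: "c \<notin> S" "c \<noteq> u" "c \<noteq> w" "adj E u c" "adj E c w" for c
    proof -
      have cV: "c \<in> V" using adj_V[OF assms(3) c(4)] by simp
      have ne1: "{u,c} \<noteq> e" using c uw(3) by (auto simp: e_def doubleton_eq_iff)
      have ne2: "{c,w} \<noteq> e" using c by (auto simp: e_def doubleton_eq_iff)
      have a1: "adj E2 u c" using c(1,4) uS ne1 by (simp add: adj2)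
      have a2: "adj E2 c w" using c(1,5) wS ne2 by (simp add: adj2)
      have "(u,c) \<in> conn_rel (V - S) E2" using a1 uV(1) uS cV c(1) by (intro conn_adj) auto
      moreover have "(c,w) \<in> conn_rel (V - S) E2" using a2 uV(2) wS cV c(1) by (intro conn_adj) auto
      ultimately have "(u,w) \<in> conn_rel (V - S) E2" by (rule conn_trans)
      then show False using nuw by blast
    qed
    have hK: "K - {u,w} \<subseteq> S"
    proof
      fix c assume c: "c \<in> K - {u,w}"
      show "c \<in> S"
      proof (rule ccontr)
        assume "c \<notin> S"
        moreover have cK: "c \<in> K" "c \<noteq> u" "c \<noteq> w" using c by auto
        moreover have "adj E u c" using Kadj[OF uK cK(1)] cK(2) by auto
        moreover have "adj E c w" using Kadj[OF cK(1) wK] cK(3) by auto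
        ultimately show False using via[of c] by blast
      qed
    qed
    have xne: "x \<noteq> u" "x \<noteq> w" using xz(1) uI by auto
    have xS: "x \<in> S"
    proof (rule ccontr)
      assume "x \<notin> S"
      moreover have "adj E u x" using xu(1) adj_sym[of E u x] by simp
      ultimately show False using via[of x] xne xu(2) by blast
    qed
    define Iu where "Iu = {y \<in> I - S. adj E u y}"
    define Iw where "Iw = {y \<in> I - S. adj E w y}"
    define R0 where "R0 = (I - S) - Iu - Iw"
    have disj: "Iu \<inter> Iw = {}"
    proof (rule ccontr)
      assume "Iu \<inter> Iw \<noteq> {}"
      then obtain y where y: "y \<in> Iu" "y \<in> Iw" by blast
      have "y \<noteq> u" "y \<noteq> w" using y uI by (auto simp: Iu_def)
      moreover have "y \<notin> S" "adj E u y" using y by (auto simp: Iu_def)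
      moreover have "adj E y w" using y adj_sym[of E y w] by (simp add: Iw_def)
      ultimately show False using via[of y] by blast
    qed
    have fIu: "finite Iu" and fIw: "finite Iw" and fR0: "finite R0" and fIS: "finite (I - S)"
      using fI by (auto simp: Iu_def Iw_def R0_def)
    have om_le: "om \<le> card ({u,w} \<union> R0)"
      unfolding om_def
    proof (rule ncomp_le)
      show "finite ({u,w} \<union> R0)" using fR0 by simp
      show "{u,w} \<union> R0 \<subseteq> V - S" using uV uS wS KI by (auto simp: R0_def)
      fix v assume v: "v \<in> V - S"
      show "\<exists>r\<in>{u,w} \<union> R0. (v,r) \<in> conn_rel (V - S) E2"
      proof (cases "v \<in> K")
        case True
        then have "v = u \<or> v = w" using hK v by blast
        moreover have "(v, v) \<in> conn_rel (V - S) E2" using v by (rule conn_refl)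
        ultimately show ?thesis by auto
      next
        case False
        then have vI: "v \<in> I" using v KI by blast
        have nev: "{v,u} \<noteq> e" "{v,w} \<noteq> e" using vI uI by (auto simp: e_def doubleton_eq_iff)
        show ?thesis
        proof (cases "v \<in> Iu")
          case True
          then have "adj E v u" using adj_sym[of E v u] by (simp add: Iu_def)
          then have "(v,u) \<in> conn_rel (V - S) E2" using v uV uS nev
            by (intro conn_adj) (auto simp: adj2)
          then show ?thesis by blast
        next
          case F2: False
          show ?thesis
          proof (cases "v \<in> Iw")
            case True
            then have "adj E v w" using adj_sym[of E v w] by (simp add: Iw_def)
            then have "(v,w) \<in> conn_rel (V - S) E2" using v uV wS nev
              by (intro conn_adj) (auto simp: adj2)
            then show ?thesis by blast
          next
            case False
            then have "v \<in> R0" using vI v F2 by (auto simp: R0_def)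
            moreover have "(v, v) \<in> conn_rel (V - S) E2" using v by (rule conn_refl)
            ultimately show ?thesis by blast
          qed
        qed
      qed
    qed
    have "card ({u,w} \<union> R0) \<le> card {u,w} + card R0" by (rule card_Un_le)
    then have omr: "om \<le> 2 + card R0" using om_le uw(3) by simp
    have ISeq: "I - S = R0 \<union> (Iu \<union> Iw)" by (auto simp: R0_def Iu_def Iw_def)
    have "card (I - S) = card R0 + card (Iu \<union> Iw)"
      unfolding ISeq by (rule card_Un_disjoint) (use fR0 fIu fIw in \<open>auto simp: R0_def\<close>)
    also have "card (Iu \<union> Iw) = card Iu + card Iw" by (rule card_Un_disjoint[OF fIu fIw disj])
    finally have cIS: "card (I - S) = card R0 + card Iu + card Iw" by simp
    have cI: "card I = card (I \<inter> S) + card (I - S)" by (rule card_Int_Diff[OF fI])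
    have Seq: "S = (K - {u,w}) \<union> (I \<inter> S)" using hK SV KI uS wS by auto
    have "card S = card (K - {u,w}) + card (I \<inter> S)"
      by (subst Seq, rule card_Un_disjoint) (use fK fI KI(2) in auto)
    moreover have "card (K - {u,w}) = card K - 2"
      using card_Diff_subset[of "{u,w}" K] uK wK uw(3) by simp
    moreover have "card K \<ge> 2"
      using card_mono[OF fK, of "{u,w}"] uK wK uw(3) by simp
    ultimately have cS: "card S + 2 = card K + card (I \<inter> S)" by simp
    have p1: "card (I \<inter> S) \<ge> 1"
    proof -
      have "I \<inter> S \<noteq> {}" using xS xz(1) by blast
      then have "card (I \<inter> S) > 0" using fI by (simp add: card_gt_0_iff)
      then show ?thesis by simp
    qed
    have a0: "card Iu = 0"
    proof (rule ccontr)
      assume a: "card Iu \<noteq> 0"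
      define Y where "Y = {y \<in> I. \<not> adj E w y}"
      have sub: "R0 \<union> Iu \<subseteq> Y" using disj by (auto simp: Y_def R0_def Iu_def Iw_def)
      have fY: "finite Y" using fI by (simp add: Y_def)
      have "card (R0 \<union> Iu) = card R0 + card Iu"
        by (rule card_Un_disjoint) (use fR0 fIu in \<open>auto simp: R0_def\<close>)
      then have cY: "card R0 + card Iu \<le> card Y" using card_mono[OF fY sub] by simp
      have Yne: "Y \<noteq> {}" using cY a by auto
      have cT: "t * (real (card Y) + 1) \<le> real (card (K - {w}))"
      proof (rule cb)
        show "K - {w} \<subseteq> V" using KI by auto
        show "Y \<subseteq> V - (K - {w})" using KI by (auto simp: Y_def)
        show "w \<in> V - (K - {w})" using uV by auto
        show "w \<notin> Y" using uI by (auto simp: Y_def)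
        show "Y \<noteq> {}" by (rule Yne)
        fix y c assume yc: "y \<in> Y" "adj E y c"
        then have "c \<in> K" using nbK by (auto simp: Y_def)
        moreover have "c \<noteq> w"
        proof
          assume "c = w"
          then have "adj E w y" using yc(2) adj_sym[of E w y] by simp
          then show False using yc(1) by (simp add: Y_def)
        qed
        ultimately show "c \<in> K - {w}" by simp
      qed
      have "card K > 0" using wK fK card_gt_0_iff by blast
      then have "card (K - {w}) + 1 = card K" using wK by (simp add: card_Diff_singleton)
      then have ckw: "real (card (K - {w})) = real (card K) - 1" by linarith
      have "om \<le> card Y + 1" using omr cY a by linarith
      then have "real om \<le> real (card Y) + 1" by linarith
      then have "t * real om \<le> t * (real (card Y) + 1)" using tpos by (intro mult_left_mono) auto
      then have "real (card S) < real (card K) - 1" using lt' cT ckw by linarith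
      moreover have "real (card S) + 2 = real (card K) + real (card (I \<inter> S))" using cS by linarith
      ultimately show False using p1 by linarith
    qed
    have fK2: "card (I - {x}) + 1 = card I"
    proof -
      have "card I > 0" using xz(1) fI card_gt_0_iff by blast
      then show ?thesis using xz(1) by (simp add: card_Diff_singleton)
    qed
    have nI2: "card I \<ge> 2"
    proof (rule ccontr)
      assume "\<not> card I \<ge> 2"
      then have cI1: "card I \<le> 1" by simp
      have "z \<notin> I"
      proof
        assume "z \<in> I"
        then have "{x,z} \<subseteq> I" using xz by auto
        then have "card {x,z} \<le> card I" using fI card_mono by blast
        then show False using xz(3) cI1 by simp
      qed
      then have zK: "z \<in> K" using xz KI by blast
      have "M \<subset> K" using MK zK zM by blast
      then have mk: "card M < card K" using fK psubset_card_mono by blast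
      have r0: "card R0 = 0" using cI cIS p1 cI1 by linarith
      have pI: "card (I \<inter> S) = 1" using cI cIS p1 cI1 by linarith
      have "real om \<le> 2" using omr r0 by simp
      then have "t * real om \<le> t * 2" using tpos by (intro mult_left_mono) auto
      then have "real (card S) < 2 * t" using lt' by linarith
      moreover have "real (card S) + 1 = real (card K)" using cS pI by linarith
      moreover have "real (card M) + 1 \<le> real (card K)" using mk by linarith
      ultimately show False using m2t by linarith
    qed
    have pI: "card (I \<inter> S) = 1"
    proof (rule ccontr)
      assume "card (I \<inter> S) \<noteq> 1"
      then have p2: "card (I \<inter> S) \<ge> 2" using p1 by simp
      have cT: "t * (real (card (I - {x})) + 1) \<le> real (card K)"
      proof (rule cb)
        show "K \<subseteq> V" using KI by auto
        show "I - {x} \<subseteq> V - K" using KI by auto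
        show "x \<in> V - K" using xV xz KI by auto
        show "x \<notin> I - {x}" by simp
        show "I - {x} \<noteq> {}"
        proof
          assume "I - {x} = {}"
          then have "card (I - {x}) = 0" by (metis card.empty)
          then show False using fK2 nI2 by simp
        qed
        fix y c assume "y \<in> I - {x}" "adj E y c"
        then show "c \<in> K" using nbK by auto
      qed
      have "real (card (I - {x})) + 1 = real (card I)" using fK2 by linarith
      then have cT': "t * real (card I) \<le> real (card K)" using cT by simp
      have "om \<le> card I" using omr cI cIS p2 by linarith
      then have "real om \<le> real (card I)" by simp
      then have "t * real om \<le> t * real (card I)" using tpos by (intro mult_left_mono) auto
      moreover have "real (card S) + 2 = real (card K) + real (card (I \<inter> S))" using cS by linarith
      ultimately show False using lt' cT' p2 by linarith
    qed
    have ISx: "I \<inter> S = {x}"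
    proof -
      have "x \<in> I \<inter> S" using xS xz by auto
      moreover have "finite (I \<inter> S)" using fI by simp
      show ?thesis
      proof (rule ccontr)
        assume "I \<inter> S \<noteq> {x}"
        then obtain y where y: "y \<in> I \<inter> S" "y \<noteq> x" using \<open>x \<in> I \<inter> S\<close> by blast
        have "{x,y} \<subseteq> I \<inter> S" using y \<open>x \<in> I \<inter> S\<close> by blast
        then have "card {x,y} \<le> card (I \<inter> S)" using \<open>finite (I \<inter> S)\<close> card_mono by blast
        then show False using pI y(2) by simp
      qed
    qed
    have nb: "\<forall>y\<in>I. adj E u y \<longrightarrow> y = x"
    proof (intro ballI impI)
      fix y assume y: "y \<in> I" "adj E u y"
      show "y = x"
      proof (rule ccontr)
        assume "y \<noteq> x"
        then have "y \<notin> S" using ISx y by auto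
        then have "y \<in> Iu" using y by (auto simp: Iu_def)
        then show False using a0 fIu by auto
      qed
    qed
    have "om \<le> 1 + card I" using omr cI cIS pI by linarith
    then have "real om \<le> 1 + real (card I)" by simp
    then have "t * real om \<le> t * (1 + real (card I))" using tpos by (intro mult_left_mono) auto
    moreover have "real (card S) + 1 = real (card K)" using cS pI by linarith
    ultimately have "real (card K) - 1 < t * (1 + real (card I))" using lt' by linarith
    then show ?thesis using nI2 nb by blast
  qed
  have Nx: "\<And>u y. u \<in> M \<Longrightarrow> y \<in> I \<Longrightarrow> adj E u y \<Longrightarrow> y = x"
  proof -
    fix u y assume u: "u \<in> M" "y \<in> I" "adj E u y"
    have "card (M - {u}) \<ge> 1" using u fM m2 by simp
    then have "M - {u} \<noteq> {}" by (cases "M - {u} = {}") auto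
    then obtain w where "w \<in> M" "w \<noteq> u" by blast
    then show "y = x" using pair[of u w] u by blast
  qed
  obtain u0 where u0: "u0 \<in> M" using m2 by fastforce
  have "card (M - {u0}) \<ge> 1" using u0 fM m2 by simp
  then have "M - {u0} \<noteq> {}" by (cases "M - {u0} = {}") auto
  then obtain w0 where w0: "w0 \<in> M" "w0 \<noteq> u0" by blast
  have P: "card I \<ge> 2" "real (card K) - 1 < t * (1 + real (card I))"
    using pair[of u0 w0] u0 w0 by auto
  have fK2: "card (I - {x}) + 1 = card I"
  proof -
    have "card I > 0" using xz(1) fI card_gt_0_iff by blast
    then show ?thesis using xz(1) by (simp add: card_Diff_singleton)
  qed
  have cT: "t * (real (card (I - {x})) + 1) \<le> real (card (K - M))"
  proof (rule cb)
    show "K - M \<subseteq> V" using KI by auto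
    show "I - {x} \<subseteq> V - (K - M)" using KI by auto
    show "x \<in> V - (K - M)" using xV xz KI by auto
    show "x \<notin> I - {x}" by simp
    show "I - {x} \<noteq> {}"
    proof
      assume "I - {x} = {}"
      then have "card (I - {x}) = 0" by (metis card.empty)
      then show False using fK2 P(1) by simp
    qed
    fix y c assume yc: "y \<in> I - {x}" "adj E y c"
    then have "c \<in> K" using nbK by auto
    moreover have "c \<notin> M"
    proof
      assume "c \<in> M"
      moreover have "adj E c y" using yc(2) adj_sym[of E c y] by simp
      ultimately have "y = x" using Nx[of c y] yc(1) by blast
      then show False using yc(1) by simp
    qed
    ultimately show "c \<in> K - M" by simp
  qed
  have "card (K - M) = card K - card M" using card_Diff_subset[OF fM MK] .
  moreover have "card M \<le> card K" using card_mono[OF fK MK] .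
  ultimately have "real (card (K - M)) = real (card K) - real (card M)" by simp
  moreover have "real (card (I - {x})) + 1 = real (card I)" using fK2 by linarith
  ultimately have A: "t * real (card I) \<le> real (card K) - real (card M)" using cT by simp
  have B: "t * (1 + real (card I)) = t + t * real (card I)" by (simp add: algebra_simps)
  have "real (card M) \<ge> 2" using m2 by simp
  then show False using A B P(2) m2t by linarith
qed

end
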